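(* Let $a,b$ be real constants with $|a|,|b|\le 0.01$ and define, for real $x>1$, \[f(x)=\frac{(x+a)(x+1)+2b-2\sqrt{x^3+ax+b}\,\sqrt{1+a+b}}{(1-x)^2}.\] Then $f(x)\ge 0.19$ for all $x>1$. *)

theory Defs
  imports Complex_Main
begin

end

theory Submission
  imports Defs
begin

theorem lemmaA1:
  fixes a b x :: real
  assumes "\<bar>a\<bar> \<le> 0.01" and "\<bar>b\<bar> \<le> 0.01" and "x > 1"
  shows "((x + a) * (x + 1) + 2 * b - 2 * sqrt (x ^ 3 + a * x + b) * sqrt (1 + a + b)) / (1 - x) ^ 2 \<ge> 0.19"
proof -
  define t where "t = x - 1"
  define c where "c = 1 + a + b"
  have t0: "t > 0" using assms(3) t_def by simp
  have ab: "-1/100 \<le> a" "a \<le> 1/100" "-1/100 \<le> b" "b \<le> 1/100" using assms(1,2) by auto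
  have c0: "c > 0" using ab c_def by simp
  define L where "L = (x + a) * (x + 1) + 2 * b - 0.19 * (1 - x)^2"
  define p where "p = x ^ 3 + a * x + b"
  have Le: "L = 2*c + (3+a)*t + 0.81*t^2" unfolding L_def c_def t_def by (simp add: field_simps power2_eq_square)
  have pe: "p = c + (3+a)*t + 3*t^2 + t^3" unfolding p_def c_def t_def by (simp add: algebra_simps power2_eq_square power3_eq_cube)
  have L0: "L \<ge> 0" unfolding Le using c0 t0 ab by (simp add: add_nonneg_nonneg)
  have p0: "p \<ge> 0" unfolding pe using c0 t0 ab by (simp add: add_nonneg_nonneg)
  define A where "A = (3+a)^2 - 8.76*c"
  define B where "B = 86/100 - 238/100*a - 4*b"
  have A0: "A \<ge> 0"
  proof -
    have "A = 24/100 - 276/100*a - 876/100*b + a^2" unfolding A_def c_def by (simp add: field_simps power2_eq_square)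
    moreover have "a^2 \<ge> 0" by simp
    ultimately show ?thesis using ab by linarith
  qed
  have B0: "B \<ge> 0" unfolding B_def using ab by linarith
  have id: "L^2 - 4*(p*c) = t^2 * (A + B*t + 0.6561*t^2)"
    unfolding Le pe A_def B_def c_def by (simp add: field_simps power2_eq_square power3_eq_cube)
  have "t^2 * (A + B*t + 0.6561*t^2) \<ge> 0" using A0 B0 t0 by (simp add: add_nonneg_nonneg)
  hence key: "4*(p*c) \<le> L^2" using id by linarith
  have "2 * sqrt p * sqrt c = sqrt (4*(p*c))" by (simp add: real_sqrt_mult)
  also have "\<dots> \<le> L" using key L0 by (simp add: real_sqrt_le_iff real_le_lsqrt)
  finally have main: "2 * sqrt p * sqrt c \<le> L" .
  have d0: "(1 - x)^2 > 0" using assms(3) by simp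
  show ?thesis
    using main d0 unfolding L_def p_def c_def
    by (simp add: pos_le_divide_eq)
qed

end
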